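(* Let $K$ be an algebraically closed field of characteristic zero, $\mathcal{K} = K(t)$, $d \ge 2$, $f_d(z) = z^d+t$, and $\alpha \in \mathcal{K}$. Then $\widehat{h}_{f_d}(\alpha) = h(\alpha)$ if $v_\infty(\alpha) < 0$, and $\widehat{h}_{f_d}(\alpha) = h(\alpha) + 1/d$ if $v_\infty(\alpha) \ge 0$. Thus, for all $n \ge 1$, $h(f_d^n(\alpha)) = d^n \widehat{h}_{f_d}(\alpha)$.
   Context: Valuations: $v_\infty(g) = \deg(\text{denominator}) - \deg(\text{numerator})$ for $g \in K(t)$. The height $h(\alpha)$ of $\alpha \in \mathcal{K}$ is its degree as a rational function in $t$, i.e. $-\sum_\mathfrak{p}\min\{v_\mathfrak{p}(\alpha),0\}$ over places of $\mathcal{K}$ trivial on $K$. The canonical height is $\widehat{h}_{f_d}(\alpha) := \lim_{n\to\infty} d^{-n} h(f_d^n(\alpha))$. *)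

theory Defs
  imports Complex_Main "HOL-Computational_Algebra.Computational_Algebra"
    "HOL-Computational_Algebra.Normalized_Fraction"
begin

text \<open>The rational function field K(t) is modelled as the fraction field of K[t],
  i.e. the type 'a poly fract. A rational function is written in lowest terms via
  quot_of_fract (normalized numerator, denominator).\<close>

definition t_var :: "'a::field poly fract" where
  "t_var = to_fract [:0, 1:]"

definition ht :: "'a::{field,field_gcd} poly fract \<Rightarrow> nat" where
  "ht \<alpha> = max (degree (fst (quot_of_fract \<alpha>))) (degree (snd (quot_of_fract \<alpha>)))"

text \<open>Valuation at infinity: deg(denominator) - deg(numerator).  For \<alpha> = 0 (true
  valuation +\<infinity>) this gives 0, which only matters through the sign test v \<ge> 0.\<close>
definition v_inf :: "'a::{field,field_gcd} poly fract \<Rightarrow> int" where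
  "v_inf \<alpha> = int (degree (snd (quot_of_fract \<alpha>))) - int (degree (fst (quot_of_fract \<alpha>)))"

definition fd :: "nat \<Rightarrow> 'a::field poly fract \<Rightarrow> 'a poly fract" where
  "fd d z = z ^ d + t_var"

definition canonical_height :: "nat \<Rightarrow> 'a::{field,field_gcd} poly fract \<Rightarrow> real" where
  "canonical_height d \<alpha> = lim (\<lambda>n. real (ht ((fd d ^^ n) \<alpha>)) / real d ^ n)"

end

theory Submission
  imports Defs
begin

lemma Fract_power: "Fract (a::'a::idom) b ^ n = Fract (a ^ n) (b ^ n)"
  by (induction n) (simp_all add: One_fract_def)

lemma deg_qof:
  fixes a b :: "'a::{field,field_gcd} poly"
  assumes cop: "coprime a b" and b: "b \<noteq> 0"
  shows "degree (fst (quot_of_fract (Fract a b))) = degree a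
       \<and> degree (snd (quot_of_fract (Fract a b))) = degree b"
proof -
  have qq: "quot_of_fract (Fract a b) = normalize_quot (a, b)"
    using quot_of_fract_quot_to_fract[of "(a,b)"] by (simp add: quot_to_fract_def)
  obtain e where e: "a = fst (normalize_quot (a,b)) * e" "b = snd (normalize_quot (a,b)) * e"
     "e dvd a" "e dvd b" "e \<noteq> 0"
    using normalize_quotE[OF b, of a] by blast
  have "is_unit e" using cop e(3,4) by (meson coprime_common_divisor)
  then have de: "degree e = 0" by (simp add: is_unit_iff_degree e(5))
  have d1: "degree a = degree (fst (normalize_quot (a,b)))"
  proof (cases "fst (normalize_quot (a,b)) = 0")
    case True then show ?thesis by (metis e(1) mult_zero_left)
  next
    case False then show ?thesis using e(1) de e(5) by (metis add_0_right degree_mult_eq)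
  qed
  have d2: "degree b = degree (snd (normalize_quot (a,b)))"
    using e(2) de e(5) by (metis add_0_right degree_mult_eq snd_normalize_quot_nonzero)
  show ?thesis using qq d1 d2 by simp
qed

lemma step:
  fixes \<alpha> :: "'a::{field,field_gcd} poly fract"
  assumes d: "d \<ge> 2"
  defines "a \<equiv> degree (fst (quot_of_fract \<alpha>))" and "b \<equiv> degree (snd (quot_of_fract \<alpha>))"
  shows "degree (fst (quot_of_fract (fd d \<alpha>))) = (if b < a then d * a else d * b + 1)
       \<and> degree (snd (quot_of_fract (fd d \<alpha>))) = d * b"
proof -
  define p where "p = fst (quot_of_fract \<alpha>)"
  define q where "q = snd (quot_of_fract \<alpha>)"
  have q0: "q \<noteq> 0" by (simp add: q_def)
  have cop: "coprime p q" using coprime_quot_of_fract p_def q_def by blast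
  have al: "\<alpha> = Fract p q" by (simp add: p_def q_def)
  have feq: "fd d \<alpha> = Fract (p ^ d + [:0,1:] * q ^ d) (q ^ d)"
    using q0 by (simp add: fd_def t_var_def al Fract_power to_fract_def)
  have cop2: "coprime (p ^ d + [:0,1:] * q ^ d) (q ^ d)"
  proof (rule coprimeI)
    fix c assume c1: "c dvd p ^ d + [:0,1:] * q ^ d" and c2: "c dvd q ^ d"
    have "c dvd [:0,1:] * q ^ d" using c2 by (rule dvd_mult)
    then have "c dvd p ^ d" using c1 by (simp add: dvd_add_left_iff)
    moreover have "coprime (p ^ d) (q ^ d)" using cop by simp
    ultimately show "is_unit c" using c2 by (meson coprime_common_divisor)
  qed
  have dq: "degree ([:0,1:] * q ^ d) = d * b + 1"
    using q0 by (simp add: degree_mult_eq degree_power_eq b_def q_def)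
  have num: "degree (p ^ d + [:0,1:] * q ^ d) = (if b < a then d * a else d * b + 1)"
  proof (cases "b < a")
    case True
    then have "p \<noteq> 0" by (auto simp: a_def p_def)
    then have "degree (p ^ d) = d * a" by (simp add: degree_power_eq a_def p_def)
    moreover have "d * b + 1 < d * a"
    proof -
      have "d * (b + 1) \<le> d * a" using True by (intro mult_le_mono2) simp
      then have "d * b + d \<le> d * a" by (simp add: algebra_simps)
      then show ?thesis using d by linarith
    qed
    ultimately show ?thesis using True dq by (simp add: degree_add_eq_left)
  next
    case False
    have "degree (p ^ d) \<le> d * a" by (metis degree_power_le a_def p_def mult.commute)
    moreover have "d * a \<le> d * b" using False by simp
    ultimately have "degree (p ^ d) < d * b + 1" by linarith
    then have "degree (p ^ d) < degree ([:0,1:] * q ^ d)" by (simp only: dq)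
    then show ?thesis using False dq by (simp add: degree_add_eq_right)
  qed
  have "degree (q ^ d) = d * b" using q0 by (simp add: degree_power_eq b_def q_def)
  then show ?thesis using deg_qof[OF cop2] q0 feq num by simp
qed

lemma step2:
  fixes \<alpha> :: "'a::{field,field_gcd} poly fract"
  assumes d: "d \<ge> 2"
  shows "ht (fd d \<alpha>) = (if v_inf \<alpha> < 0 then d * ht \<alpha> else d * ht \<alpha> + 1) \<and> v_inf (fd d \<alpha>) < 0"
proof -
  define a where "a = degree (fst (quot_of_fract \<alpha>))"
  define b where "b = degree (snd (quot_of_fract \<alpha>))"
  have s: "degree (fst (quot_of_fract (fd d \<alpha>))) = (if b < a then d * a else d * b + 1)"
     "degree (snd (quot_of_fract (fd d \<alpha>))) = d * b"
    using step[OF d, of \<alpha>] by (simp_all add: a_def b_def)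
  have v: "v_inf \<alpha> < 0 \<longleftrightarrow> b < a" by (simp add: v_inf_def a_def b_def)
  have h: "ht \<alpha> = max a b" by (simp add: ht_def a_def b_def)
  show ?thesis
  proof (cases "b < a")
    case True
    then have "d * b < d * a" using d by simp
    then show ?thesis using True s v h by (simp add: ht_def v_inf_def max_def)
  next
    case False
    then show ?thesis using s v h by (simp add: ht_def v_inf_def max_def)
  qed
qed

lemma iter:
  fixes \<alpha> :: "'a::{field,field_gcd} poly fract"
  assumes d: "d \<ge> 2" and n: "n \<ge> 1"
  shows "ht ((fd d ^^ n) \<alpha>) = d ^ (n - 1) * ht (fd d \<alpha>) \<and> v_inf ((fd d ^^ n) \<alpha>) < 0"
  using n
proof (induction n rule: dec_induct)
  case base
  then show ?case using step2[OF d, of \<alpha>] by simp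
next
  case (step m)
  have e: "(fd d ^^ Suc m) \<alpha> = fd d ((fd d ^^ m) \<alpha>)" by simp
  obtain k where k: "m = Suc k" using step(1) by (cases m) auto
  show ?case using step2[OF d, of "(fd d ^^ m) \<alpha>"] step(3) unfolding e by (simp add: k)
qed

theorem corollary2p2:
  fixes d :: nat and \<alpha> :: "'a::{alg_closed_field, field_char_0, field_gcd} poly fract"
  assumes "d \<ge> 2"
  shows "convergent (\<lambda>n. real (ht ((fd d ^^ n) \<alpha>)) / real d ^ n)
       \<and> canonical_height d \<alpha> =
           (if v_inf \<alpha> < 0 then real (ht \<alpha>) else real (ht \<alpha>) + 1 / real d)
       \<and> (\<forall>n\<ge>1. real (ht ((fd d ^^ n) \<alpha>)) = real d ^ n * canonical_height d \<alpha>)"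
proof -
  define c where "c = real (ht (fd d \<alpha>)) / real d"
  have dpos: "real d > 0" using assms by simp
  have eq: "real (ht ((fd d ^^ n) \<alpha>)) / real d ^ n = c" if "n \<ge> 1" for n
  proof -
    have "ht ((fd d ^^ n) \<alpha>) = d ^ (n - 1) * ht (fd d \<alpha>)" using iter[OF assms that, of \<alpha>] by simp
    moreover have "real d ^ n = real d ^ (n - 1) * real d" using that
      by (metis Suc_diff_le diff_Suc_1 power_Suc2)
    ultimately show ?thesis using dpos by (simp add: c_def)
  qed
  have ev: "eventually (\<lambda>n. real (ht ((fd d ^^ n) \<alpha>)) / real d ^ n = c) sequentially"
    using eq eventually_sequentially by blast
  have lim: "(\<lambda>n. real (ht ((fd d ^^ n) \<alpha>)) / real d ^ n) \<longlonglongrightarrow> c"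
    by (rule tendsto_eventually[OF ev])
  have ch: "canonical_height d \<alpha> = c" unfolding canonical_height_def using lim by (rule limI)
  have cval: "c = (if v_inf \<alpha> < 0 then real (ht \<alpha>) else real (ht \<alpha>) + 1 / real d)"
    using step2[OF assms, of \<alpha>] dpos by (simp add: c_def field_simps)
  have third: "\<forall>n\<ge>1. real (ht ((fd d ^^ n) \<alpha>)) = real d ^ n * canonical_height d \<alpha>"
  proof (intro allI impI)
    fix n :: nat assume "n \<ge> 1"
    from eq[OF this] dpos show "real (ht ((fd d ^^ n) \<alpha>)) = real d ^ n * canonical_height d \<alpha>"
      by (simp add: ch field_simps)
  qed
  show ?thesis using lim ch cval third convergent_def by blast
qed

end
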